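(* Fix a user $i$, a horizon $T\in\mathbb{N}$, integrable real random variables $X_i(t)$ and $Y_i(t)$ with $Y_i(t)\ge 0$ almost surely ($t=1,\dots,T$), a constant $C_{\text{a},i}\ge 0$, and real constants $\pi_{\text{PV}},\pi_{\text{in}},\pi_{\text{out}},\pi_{\text{gas}}$. For $a_i\ge 0$ define $$J_i(a_i,C_{\text{a},i})=a_i\pi_{\text{PV}}+\sum_{t=1}^{T}\Big\{-\pi_{\text{in}}\,\mathbb{E}\big[\max\{a_iY_i(t)-X_i(t),0\}\big]+\pi_{\text{out}}\,\mathbb{E}\big[\min\{\max\{X_i(t)-a_iY_i(t),0\},\,C_{\text{a},i}\}\big]+\pi_{\text{gas}}\,\mathbb{E}\big[\max\{X_i(t)-a_iY_i(t)-C_{\text{a},i},0\}\big]\Big\}.$$ If $\pi_{\text{gas}}\ge\pi_{\text{out}}\ge\pi_{\text{in}}$, then $J_i$ is convex with respect to $a_i$.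
   Context: This is the cost of user $i$ in a joint-storage scenario: $a_i$ is the area of PV panels, $X_i(t)$ the daily power consumption, $Y_i(t)$ the PV generation per unit area on day $t$, $C_{\text{a},i}$ the maximal daily amount of power user $i$ may buy from a manager, $\pi_{\text{in}}$ the price at which the user sells surplus power to the manager (possibly negative), $\pi_{\text{out}}$ the price at which the manager sells power to the user, $\pi_{\text{gas}}$ the unit cost of fuel-cell generation, $\pi_{\text{PV}}$ the unit price of PV panels. *)

theory Defs
  imports "HOL-Probability.Probability"
begin

definition cost_J ::
  "'s measure \<Rightarrow> nat \<Rightarrow> (nat \<Rightarrow> 's \<Rightarrow> real) \<Rightarrow> (nat \<Rightarrow> 's \<Rightarrow> real) \<Rightarrow>
   real \<Rightarrow> real \<Rightarrow> real \<Rightarrow> real \<Rightarrow> real \<Rightarrow> real \<Rightarrow> real"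
where
  "cost_J M T X Y pi_PV pi_in pi_out pi_gas a Ca =
     a * pi_PV +
     (\<Sum>t=1..T.
        - pi_in * (\<integral>w. max (a * Y t w - X t w) 0 \<partial>M)
        + pi_out * (\<integral>w. min (max (X t w - a * Y t w) 0) Ca \<partial>M)
        + pi_gas * (\<integral>w. max (X t w - a * Y t w - Ca) 0 \<partial>M))"

end

theory Submission
  imports Defs
begin

lemma pw_max:
  fixes pin pout pgas Ca u :: real
  assumes "Ca \<ge> 0" "pin \<le> pout" "pout \<le> pgas"
  shows "- pin * max (- u) 0 + pout * min (max u 0) Ca + pgas * max (u - Ca) 0
     = max (pin * u) (max (pout * u) (pout * Ca + pgas * (u - Ca)))"
proof (cases "u \<le> 0")
  case True
  have 1: "pout * u \<le> pin * u" using True assms by (simp add: mult_right_mono_neg)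
  have 2: "pgas * (u - Ca) \<le> pout * (u - Ca)" using True assms
    by (simp add: mult_right_mono_neg)
  have 3: "pout * Ca + pout * (u - Ca) = pout * u" by (simp add: algebra_simps)
  have L: "- pin * max (- u) 0 + pout * min (max u 0) Ca + pgas * max (u - Ca) 0 = pin * u"
    using True assms by simp
  have R: "max (pin * u) (max (pout * u) (pout * Ca + pgas * (u - Ca))) = pin * u"
    using 1 2 3 by (simp add: max_def)
  show ?thesis using L R by simp
next
  case False
  show ?thesis
  proof (cases "u \<le> Ca")
    case True
    have 1: "pin * u \<le> pout * u" using False assms by (simp add: mult_right_mono)
    have 2: "pgas * (u - Ca) \<le> pout * (u - Ca)" using True assms
      by (simp add: mult_right_mono_neg)
    have 3: "pout * Ca + pout * (u - Ca) = pout * u" by (simp add: algebra_simps)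
    have L: "- pin * max (- u) 0 + pout * min (max u 0) Ca + pgas * max (u - Ca) 0 = pout * u"
      using True False assms by simp
    have R: "max (pin * u) (max (pout * u) (pout * Ca + pgas * (u - Ca))) = pout * u"
      using 1 2 3 by (simp add: max_def)
    show ?thesis using L R by simp
  next
    case F2: False
    have 1: "pin * u \<le> pout * u" using False assms by (simp add: mult_right_mono)
    have 2: "pgas * (u - Ca) \<ge> pout * (u - Ca)" using F2 assms
      by (simp add: mult_right_mono)
    have 3: "pout * Ca + pout * (u - Ca) = pout * u" by (simp add: algebra_simps)
    have L: "- pin * max (- u) 0 + pout * min (max u 0) Ca + pgas * max (u - Ca) 0 = pout * Ca + pgas * (u - Ca)"
      using F2 False assms by simp
    have R: "max (pin * u) (max (pout * u) (pout * Ca + pgas * (u - Ca))) = pout * Ca + pgas * (u - Ca)"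
      using 1 2 3 by (simp add: max_def)
    show ?thesis using L R by simp
  qed
qed

lemma max3_conv:
  fixes A B C :: "real \<Rightarrow> real" and t x y :: real
  assumes "\<And>z. A z = pA * z + qA" "\<And>z. B z = pB * z + qB" "\<And>z. C z = pC * z + qC"
    and "0 \<le> t" "t \<le> 1"
  shows "max (A ((1-t)*x + t*y)) (max (B ((1-t)*x + t*y)) (C ((1-t)*x + t*y)))
    \<le> (1-t) * max (A x) (max (B x) (C x)) + t * max (A y) (max (B y) (C y))"
proof -
  have L: "\<And>p q. p * ((1-t)*x + t*y) + q = (1-t) * (p*x+q) + t*(p*y+q)"
    by (simp add: algebra_simps)
  have m: "\<And>a b c d. a \<le> b \<Longrightarrow> c \<le> d \<Longrightarrow> (1-t)*a + t*c \<le> (1-t)*b + t*d"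
    using assms(4,5) by (simp add: add_mono mult_left_mono)
  show ?thesis unfolding assms(1-3) L
    by (intro max.boundedI m) auto
qed

lemma pw_conv:
  fixes pin pout pgas Ca xv yv t a b :: real
  assumes "Ca \<ge> 0" "pin \<le> pout" "pout \<le> pgas" "0 \<le> t" "t \<le> 1"
  defines "g \<equiv> \<lambda>a. - pin * max (a * yv - xv) 0 + pout * min (max (xv - a * yv) 0) Ca
                 + pgas * max (xv - a * yv - Ca) 0"
  shows "g ((1-t)*a + t*b) \<le> (1-t) * g a + t * g b"
proof -
  have e: "g z = max (pin * (xv - z*yv)) (max (pout * (xv - z*yv)) (pout * Ca + pgas * ((xv - z*yv) - Ca)))" for z
    using pw_max[OF assms(1-3), of "xv - z*yv"] unfolding g_def by (simp add: algebra_simps)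
  show ?thesis unfolding e
    by (rule max3_conv[where pA="-pin*yv" and qA="pin*xv" and pB="-pout*yv" and qB="pout*xv"
          and pC="-pgas*yv" and qC="pout*Ca + pgas*(xv - Ca)"]) (auto simp: algebra_simps assms)
qed

theorem lemma2:
  fixes M :: "'s measure" and T :: nat
    and X Y :: "nat \<Rightarrow> 's \<Rightarrow> real"
    and Ca pi_PV pi_in pi_out pi_gas :: real
  assumes "prob_space M"
    and "\<And>t. t \<in> {1..T} \<Longrightarrow> integrable M (X t)"
    and "\<And>t. t \<in> {1..T} \<Longrightarrow> integrable M (Y t)"
    and "\<And>t. t \<in> {1..T} \<Longrightarrow> (AE w in M. Y t w \<ge> 0)"
    and "Ca \<ge> 0"
    and "pi_gas \<ge> pi_out" and "pi_out \<ge> pi_in"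
  shows "convex_on {0..} (\<lambda>a. cost_J M T X Y pi_PV pi_in pi_out pi_gas a Ca)"
proof -
  interpret prob_space M by fact
  define g where "g \<equiv> \<lambda>t a w. - pi_in * max (a * Y t w - X t w) 0 + pi_out * min (max (X t w - a * Y t w) 0) Ca
                 + pi_gas * max (X t w - a * Y t w - Ca) 0"
  have i1: "integrable M (\<lambda>w. max (a * Y t w - X t w) 0)" 
    and i2: "integrable M (\<lambda>w. min (max (X t w - a * Y t w) 0) Ca)"
    and i3: "integrable M (\<lambda>w. max (X t w - a * Y t w - Ca) 0)"
    if "t \<in> {1..T}" for t a
    using assms(2,3)[OF that] by auto
  have ig: "integrable M (g t a)" if "t \<in> {1..T}" for t a
    unfolding g_def using i1[OF that] i2[OF that] i3[OF that] by auto
  have hJ: "cost_J M T X Y pi_PV pi_in pi_out pi_gas a Ca = a * pi_PV + (\<Sum>t=1..T. integral\<^sup>L M (g t a))" for a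
    unfolding cost_J_def
  proof (intro arg_cong2[where f="(+)"] refl sum.cong)
    fix t assume t: "t \<in> {1..T}"
    show "- pi_in * (\<integral>w. max (a * Y t w - X t w) 0 \<partial>M)
        + pi_out * (\<integral>w. min (max (X t w - a * Y t w) 0) Ca \<partial>M)
        + pi_gas * (\<integral>w. max (X t w - a * Y t w - Ca) 0 \<partial>M) = integral\<^sup>L M (g t a)"
      unfolding g_def using i1[OF t] i2[OF t] i3[OF t] by simp
  qed
  show ?thesis
  proof (rule convex_onI)
    fix s x y :: real assume s: "0 < s" "s < 1"
    have ht: "integral\<^sup>L M (g t ((1-s)*x + s*y)) \<le> (1-s) * integral\<^sup>L M (g t x) + s * integral\<^sup>L M (g t y)"
      if t: "t \<in> {1..T}" for t
    proof -
      have "integral\<^sup>L M (g t ((1-s)*x + s*y)) \<le> integral\<^sup>L M (\<lambda>w. (1-s) * g t x w + s * g t y w)"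
        apply (rule integral_mono)
        using ig[OF t] apply auto[2]
        unfolding g_def apply (rule pw_conv) using assms(5-7) s by auto
      also have "\<dots> = (1-s) * integral\<^sup>L M (g t x) + s * integral\<^sup>L M (g t y)"
        using ig[OF t] by simp
      finally show ?thesis .
    qed
    have "(\<Sum>t=1..T. integral\<^sup>L M (g t ((1-s)*x + s*y))) \<le> (\<Sum>t=1..T. (1-s) * integral\<^sup>L M (g t x) + s * integral\<^sup>L M (g t y))"
      by (rule sum_mono) (rule ht)
    also have "\<dots> = (1-s) * (\<Sum>t=1..T. integral\<^sup>L M (g t x)) + s * (\<Sum>t=1..T. integral\<^sup>L M (g t y))"
      by (simp add: sum.distrib sum_distrib_left)
    finally show "cost_J M T X Y pi_PV pi_in pi_out pi_gas ((1 - s) *\<^sub>R x + s *\<^sub>R y) Ca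
      \<le> (1 - s) * cost_J M T X Y pi_PV pi_in pi_out pi_gas x Ca + s * cost_J M T X Y pi_PV pi_in pi_out pi_gas y Ca"
      unfolding hJ by (simp add: algebra_simps)
  qed (simp add: convex_real_interval)
qed

end
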